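(* Let $\mathbf{k}$ be a commutative ring, $n\ge0$, $\mathcal{A}=\mathbf{k}[S_n]$. For every $\beta\in\operatorname{Comp}_n$, the subspace $\mathcal{R}_\beta$ is a $(\Sigma_n,\mathcal{A})$-subbimodule of $\mathcal{A}$; that is, $\mathcal{R}_\beta\mathcal{A}\subseteq\mathcal{R}_\beta$ and $\Sigma_n\mathcal{R}_\beta\subseteq\mathcal{R}_\beta$.
   Context: $S_n$ is the symmetric group on $[n]=\{1,\dots,n\}$, with product $(uw)(i)=u(w(i))$. For $w\in S_n$, $\operatorname{Des}(w)=\{i\in[n-1]: w(i)>w(i+1)\}$. For $I\subseteq[n-1]$, $\mathbf{B}_I=\sum_{w\in S_n,\ \operatorname{Des}(w)\subseteq I} w\in\mathcal{A}$. The descent algebra $\Sigma_n\subseteq\mathcal{A}$ is the $\mathbf{k}$-span of all $\mathbf{B}_I$ for $I\subseteq[n-1]$. A composition $\alpha=(\alpha_1,\dots,\alpha_p)$ of $n$ is a finite sequence of positive integers with sum $n$; $\operatorname{Comp}_n$ is the set of these. $\operatorname{Set}(\alpha)=\{\alpha_1,\alpha_1+\alpha_2,\dots,\alpha_1+\cdots+\alpha_{p-1}\}$, $\mathbf{B}_\alpha:=\mathbf{B}_{\operatorname{Set}(\alpha)}$, and $\mathcal{R}_\beta:=\mathbf{B}_\beta\mathcal{A}$. *)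

theory Defs
  imports "HOL-Combinatorics.Permutations"
begin

definition Sn :: "nat \<Rightarrow> (nat \<Rightarrow> nat) set" where
  "Sn n = {p. p permutes {1..n}}"

text \<open>The group algebra k[S_n]: functions S_n -> k, represented as functions on all maps
  vanishing outside S_n.\<close>
definition grp_alg :: "nat \<Rightarrow> ((nat \<Rightarrow> nat) \<Rightarrow> 'k::comm_ring_1) set" where
  "grp_alg n = {a. \<forall>g. g \<notin> Sn n \<longrightarrow> a g = 0}"

definition gmult :: "nat \<Rightarrow> ((nat \<Rightarrow> nat) \<Rightarrow> 'k::comm_ring_1) \<Rightarrow> ((nat \<Rightarrow> nat) \<Rightarrow> 'k)
    \<Rightarrow> ((nat \<Rightarrow> nat) \<Rightarrow> 'k)" where
  "gmult n a b = (\<lambda>g. \<Sum>(u, w) \<in> {(u, w). u \<in> Sn n \<and> w \<in> Sn n \<and> u \<circ> w = g}. a u * b w)"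

definition Des :: "nat \<Rightarrow> (nat \<Rightarrow> nat) \<Rightarrow> nat set" where
  "Des n w = {i \<in> {1..n-1}. w i > w (Suc i)}"

definition BI :: "nat \<Rightarrow> nat set \<Rightarrow> ((nat \<Rightarrow> nat) \<Rightarrow> 'k::comm_ring_1)" where
  "BI n I = (\<lambda>w. if w \<in> Sn n \<and> Des n w \<subseteq> I then 1 else 0)"

text \<open>The descent algebra: the k-span of all B_I, I a subset of [n-1]
  (finitely many generators, so the span is the set of their linear combinations).\<close>
definition descent_alg :: "nat \<Rightarrow> ((nat \<Rightarrow> nat) \<Rightarrow> 'k::comm_ring_1) set" where
  "descent_alg n = {(\<lambda>w. \<Sum>I\<in>Pow {1..n-1}. c I * BI n I w) | c. True}"

definition Comp :: "nat \<Rightarrow> nat list set" where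
  "Comp n = {\<alpha>. (\<forall>x\<in>set \<alpha>. 0 < x) \<and> sum_list \<alpha> = n}"

definition SetC :: "nat list \<Rightarrow> nat set" where
  "SetC \<alpha> = {sum_list (take i \<alpha>) | i. 1 \<le> i \<and> i < length \<alpha>}"

definition B_comp :: "nat \<Rightarrow> nat list \<Rightarrow> ((nat \<Rightarrow> nat) \<Rightarrow> 'k::comm_ring_1)" where
  "B_comp n \<alpha> = BI n (SetC \<alpha>)"

definition R_comp :: "nat \<Rightarrow> nat list \<Rightarrow> ((nat \<Rightarrow> nat) \<Rightarrow> 'k::comm_ring_1) set" where
  "R_comp n \<beta> = {gmult n (B_comp n \<beta>) a | a. a \<in> grp_alg n}"

end

theory Submission
  imports Defs
begin


abbreviation "D n \<equiv> {1..(n::nat)}"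

lemma Sn_finite: "finite (Sn n)"
  unfolding Sn_def by (rule finite_permutations) simp

lemma gmult_eq:
  "gmult n a b g = (if g \<in> Sn n then (\<Sum>u\<in>Sn n. a u * b (inv u \<circ> g)) else 0)"
proof (cases "g \<in> Sn n")
  case True
  have pg: "g permutes D n" using True by (simp add: Sn_def)
  have eq: "{(u, w). u \<in> Sn n \<and> w \<in> Sn n \<and> u \<circ> w = g} = (\<lambda>u. (u, inv u \<circ> g)) ` Sn n"
  proof (rule set_eqI, rule iffI)
    fix x assume "x \<in> {(u, w). u \<in> Sn n \<and> w \<in> Sn n \<and> u \<circ> w = g}"
    then obtain u w where x: "x = (u,w)" "u \<in> Sn n" "w \<in> Sn n" "u \<circ> w = g" by auto
    have "inv u \<circ> g = (inv u \<circ> u) \<circ> w" using x(4) by (auto simp: o_assoc)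
    then have "inv u \<circ> g = w" using x permutes_inv_o(2)[of u "D n"] unfolding Sn_def by simp
    then show "x \<in> (\<lambda>u. (u, inv u \<circ> g)) ` Sn n" using x by auto
  next
    fix x assume "x \<in> (\<lambda>u. (u, inv u \<circ> g)) ` Sn n"
    then obtain u where x: "x = (u, inv u \<circ> g)" "u \<in> Sn n" by auto
    have pu: "u permutes D n" using x by (simp add: Sn_def)
    have "u \<circ> (inv u \<circ> g) = g" using permutes_inv_o(1)[OF pu] by (simp add: o_assoc)
    moreover have "inv u \<circ> g \<in> Sn n" using pu pg by (simp add: Sn_def permutes_compose permutes_inv)
    ultimately show "x \<in> {(u, w). u \<in> Sn n \<and> w \<in> Sn n \<and> u \<circ> w = g}" using x by auto
  qed
  have inj: "inj_on (\<lambda>u. (u, inv u \<circ> g)) (Sn n)" by (auto simp: inj_on_def)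
  show ?thesis using True unfolding gmult_def eq
    by (simp add: sum.reindex[OF inj])
next
  case False
  have e: "{(u, w). u \<in> Sn n \<and> w \<in> Sn n \<and> u \<circ> w = g} = {}"
    using False by (auto simp: Sn_def permutes_compose)
  show ?thesis using False unfolding gmult_def e by simp
qed

lemma gmult_in: "g \<in> Sn n \<Longrightarrow> gmult n a b g = (\<Sum>u\<in>Sn n. a u * b (inv u \<circ> g))"
  by (simp add: gmult_eq)

lemma gmult_out: "g \<notin> Sn n \<Longrightarrow> gmult n a b g = 0"
  by (simp add: gmult_eq)

lemma gmult_grp_alg: "gmult n a b \<in> grp_alg n"
  by (simp add: grp_alg_def gmult_out)

lemma inner_reindex:
  assumes v: "v \<in> Sn n" and g: "g \<in> Sn n"
  shows "(\<Sum>u\<in>Sn n. b (inv v \<circ> u) * c (inv u \<circ> g)) = (\<Sum>t\<in>Sn n. b t * c (inv t \<circ> (inv v \<circ> g)))"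
proof -
  have pv: "v permutes D n" using v by (simp add: Sn_def)
  have "(\<Sum>u\<in>Sn n. b (inv v \<circ> u) * c (inv u \<circ> g)) = (\<Sum>t\<in>Sn n. b (inv v \<circ> (v \<circ> t)) * c (inv (v \<circ> t) \<circ> g))"
    unfolding Sn_def by (rule setum_permutations_compose_left[OF pv])
  also have "\<dots> = (\<Sum>t\<in>Sn n. b t * c (inv t \<circ> (inv v \<circ> g)))"
  proof (rule sum.cong[OF refl])
    fix t assume "t \<in> Sn n"
    then have pt: "t permutes D n" by (simp add: Sn_def)
    have "inv v \<circ> (v \<circ> t) = (inv v \<circ> v) \<circ> t" by (simp add: o_assoc)
    then have 1: "inv v \<circ> (v \<circ> t) = t" using permutes_inv_o(2)[OF pv] by simp
    have 2: "inv (v \<circ> t) = inv t \<circ> inv v"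
      by (rule o_inv_distrib) (use pv pt permutes_bij in auto)
    show "b (inv v \<circ> (v \<circ> t)) * c (inv (v \<circ> t) \<circ> g) = b t * c (inv t \<circ> (inv v \<circ> g))"
      using 1 2 by (simp add: o_assoc)
  qed
  finally show ?thesis .
qed

lemma inv_comp_Sn: "v \<in> Sn n \<Longrightarrow> g \<in> Sn n \<Longrightarrow> inv v \<circ> g \<in> Sn n"
  by (simp add: Sn_def permutes_compose permutes_inv)

lemma gmult_assoc: "gmult n (gmult n a b) c = gmult n a (gmult n b c)"
proof (rule ext)
  fix g
  show "gmult n (gmult n a b) c g = gmult n a (gmult n b c) g"
  proof (cases "g \<in> Sn n")
    case False then show ?thesis by (simp add: gmult_out)
  next
    case True
    have "gmult n (gmult n a b) c g = (\<Sum>u\<in>Sn n. (\<Sum>v\<in>Sn n. a v * b (inv v \<circ> u)) * c (inv u \<circ> g))"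
      using True by (simp add: gmult_in)
    also have "\<dots> = (\<Sum>v\<in>Sn n. a v * (\<Sum>u\<in>Sn n. b (inv v \<circ> u) * c (inv u \<circ> g)))"
      unfolding sum_distrib_left sum_distrib_right mult.assoc by (rule sum.swap)
    also have "\<dots> = (\<Sum>v\<in>Sn n. a v * gmult n b c (inv v \<circ> g))"
      using True by (intro sum.cong refl) (simp add: inner_reindex gmult_in inv_comp_Sn)
    also have "\<dots> = gmult n a (gmult n b c) g" using True by (simp add: gmult_in)
    finally show ?thesis .
  qed
qed

lemma gmult_lin1:
  assumes "finite S"
  shows "gmult n (\<lambda>w. \<Sum>I\<in>S. c I * f I w) r = (\<lambda>g. \<Sum>I\<in>S. c I * gmult n (f I) r g)"
proof (rule ext)
  fix g
  show "gmult n (\<lambda>w. \<Sum>I\<in>S. c I * f I w) r g = (\<Sum>I\<in>S. c I * gmult n (f I) r g)"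
    by (cases "g \<in> Sn n") (simp_all add: gmult_eq sum_distrib_left sum_distrib_right mult.assoc, rule sum.swap)
qed

lemma gmult_lin2:
  assumes "finite S"
  shows "gmult n r (\<lambda>w. \<Sum>I\<in>S. c I * f I w) = (\<lambda>g. \<Sum>I\<in>S. c I * gmult n r (f I) g)"
proof (rule ext)
  fix g
  show "gmult n r (\<lambda>w. \<Sum>I\<in>S. c I * f I w) g = (\<Sum>I\<in>S. c I * gmult n r (f I) g)"
    by (cases "g \<in> Sn n") (simp_all add: gmult_eq sum_distrib_left sum_distrib_right mult.assoc mult.left_commute, rule sum.swap)
qed



definition seg :: "nat \<Rightarrow> nat set \<Rightarrow> nat \<Rightarrow> nat" where
  "seg n J u = card {i. i \<in> J \<and> i < u \<and> i < n}"

definition incr :: "nat \<Rightarrow> nat set \<Rightarrow> (nat \<Rightarrow> nat) \<Rightarrow> bool" where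
  "incr n J w \<longleftrightarrow> (\<forall>p\<in>D n. \<forall>q\<in>D n. p < q \<longrightarrow> seg n J p = seg n J q \<longrightarrow> w p < w q)"

definition YY :: "nat \<Rightarrow> nat set \<Rightarrow> (nat \<Rightarrow> nat) set" where
  "YY n J = {y \<in> Sn n. \<forall>p\<in>D n. seg n J (y p) = seg n J p}"

lemma seg_mono: "p \<le> q \<Longrightarrow> seg n J p \<le> seg n J q"
  unfolding seg_def by (rule card_mono) auto

lemma seg_step: "i \<in> J \<Longrightarrow> p \<le> i \<Longrightarrow> i < q \<Longrightarrow> q \<le> n \<Longrightarrow> seg n J p < seg n J q"
proof -
  assume a: "i \<in> J" "p \<le> i" "i < q" "q \<le> n"
  have fin: "finite {i. i \<in> J \<and> i < q \<and> i < n}"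
    by (rule finite_subset[of _ "{..<n}"]) auto
  have sub: "{i. i \<in> J \<and> i < p \<and> i < n} \<subset> {i. i \<in> J \<and> i < q \<and> i < n}"
  proof
    show "{i. i \<in> J \<and> i < p \<and> i < n} \<subseteq> {i. i \<in> J \<and> i < q \<and> i < n}" using a by auto
    have "i \<in> {i. i \<in> J \<and> i < q \<and> i < n}" "i \<notin> {i. i \<in> J \<and> i < p \<and> i < n}" using a by auto
    then show "{i. i \<in> J \<and> i < p \<and> i < n} \<noteq> {i. i \<in> J \<and> i < q \<and> i < n}" by blast
  qed
  show ?thesis unfolding seg_def by (rule psubset_card_mono[OF fin sub])
qed

lemma seg_Suc: "i \<notin> J \<Longrightarrow> seg n J (Suc i) = seg n J i"
proof -
  assume "i \<notin> J"
  then have "{j. j \<in> J \<and> j < Suc i \<and> j < n} = {j. j \<in> J \<and> j < i \<and> j < n}"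
    using less_Suc_eq by auto
  then show ?thesis unfolding seg_def by simp
qed

lemma Sn_perm: "w \<in> Sn n \<Longrightarrow> w permutes D n" by (simp add: Sn_def)

lemma Sn_inj: "w \<in> Sn n \<Longrightarrow> w a = w b \<Longrightarrow> a = b"
  by (meson Sn_perm permutes_inj injD)

lemma Sn_in: "w \<in> Sn n \<Longrightarrow> p \<in> D n \<Longrightarrow> w p \<in> D n"
proof -
  assume w: "w \<in> Sn n" and p: "p \<in> D n"
  have "w permutes D n" using w by (rule Sn_perm)
  then show ?thesis using p by (simp only: permutes_in_image)
qed

lemma chain_less:
  fixes f :: "nat \<Rightarrow> nat"
  assumes "\<And>i. p \<le> i \<Longrightarrow> i < q \<Longrightarrow> f i < f (Suc i)" and "p < q"
  shows "f p < f q"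
  using assms
proof (induction q)
  case 0 then show ?case by simp
next
  case (Suc q)
  show ?case
  proof (cases "p < q")
    case True
    then have "f p < f q" using Suc by auto
    also have "f q < f (Suc q)" using Suc True by auto
    finally show ?thesis .
  next
    case False
    then have "p = q" using Suc by auto
    then show ?thesis using Suc by auto
  qed
qed

lemma Des_incr:
  assumes w: "w \<in> Sn n"
  shows "Des n w \<subseteq> J \<longleftrightarrow> incr n J w"
proof
  assume des: "Des n w \<subseteq> J"
  show "incr n J w" unfolding incr_def
  proof (intro ballI impI)
    fix p q assume p: "p \<in> D n" and q: "q \<in> D n" and pq: "p < q" and sg: "seg n J p = seg n J q"
    show "w p < w q"
    proof (rule chain_less[OF _ pq])
      fix i assume i: "p \<le> i" "i < q"
      have "i \<notin> J" using seg_step[of i J p q n] i q sg by auto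
      then have "i \<notin> Des n w" using des by auto
      moreover have "i \<in> {1..n-1}" using i p q by auto
      ultimately have "\<not> w i > w (Suc i)" unfolding Des_def by auto
      moreover have "w i \<noteq> w (Suc i)" using Sn_inj[OF w] by force
      ultimately show "w i < w (Suc i)" by auto
    qed
  qed
next
  assume inc: "incr n J w"
  show "Des n w \<subseteq> J"
  proof
    fix i assume i: "i \<in> Des n w"
    show "i \<in> J"
    proof (rule ccontr)
      assume "i \<notin> J"
      then have "seg n J (Suc i) = seg n J i" by (rule seg_Suc)
      moreover have "i \<in> D n" "Suc i \<in> D n" using i unfolding Des_def by auto
      ultimately have "w i < w (Suc i)" using inc unfolding incr_def by auto
      then show False using i unfolding Des_def by auto
    qed
  qed
qed

lemma L1:
  assumes w: "w \<in> Sn n" and inc: "incr n J w" and p: "p \<in> D n" and q: "q \<in> D n"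
  shows "p < q \<longleftrightarrow> seg n J p < seg n J q \<or> (seg n J p = seg n J q \<and> w p < w q)"
proof
  assume "p < q"
  then show "seg n J p < seg n J q \<or> (seg n J p = seg n J q \<and> w p < w q)"
    using seg_mono[of p q n J] inc p q unfolding incr_def by force
next
  assume h: "seg n J p < seg n J q \<or> (seg n J p = seg n J q \<and> w p < w q)"
  show "p < q"
  proof (rule ccontr)
    assume "\<not> p < q"
    then have "q < p \<or> q = p" by auto
    then show False
    proof
      assume qp: "q < p"
      then have "seg n J q \<le> seg n J p" by (simp add: seg_mono)
      then have "seg n J p = seg n J q \<and> w p < w q" using h by auto
      moreover have "w q < w p" using inc qp p q calculation unfolding incr_def by auto
      ultimately show False by auto
    next
      assume "q = p" then show False using h by auto
    qed
  qed
qed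

definition rk :: "nat \<Rightarrow> (nat \<Rightarrow> nat) \<Rightarrow> nat \<Rightarrow> nat" where
  "rk n K b = (if b \<in> D n then Suc (card {c \<in> D n. K c < K b}) else b)"

lemma rk_less:
  fixes K :: "nat \<Rightarrow> nat"
  assumes inj: "inj_on K (D n)" and b: "b \<in> D n" and c: "c \<in> D n"
  shows "rk n K b < rk n K c \<longleftrightarrow> K b < K c"
proof -
  have A: "card {c' \<in> D n. K c' < K b} < card {c' \<in> D n. K c' < K c}" if "K b < K c" "b \<in> D n" "c \<in> D n" for b c
    by (rule psubset_card_mono) (use that in auto)
  show ?thesis
  proof
    assume "rk n K b < rk n K c"
    show "K b < K c"
    proof (rule ccontr)
      assume "\<not> K b < K c"
      then have "K c < K b \<or> K b = K c" by auto
      then show False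
      proof
        assume "K c < K b"
        then have "rk n K c < rk n K b" using A[of c b] b c unfolding rk_def by simp
        then show False using \<open>rk n K b < rk n K c\<close> by simp
      next
        assume "K b = K c"
        then have "b = c" using inj b c unfolding inj_on_def by blast
        then show False using \<open>rk n K b < rk n K c\<close> by simp
      qed
    qed
  next
    assume "K b < K c" then show "rk n K b < rk n K c" using A[of b c] b c unfolding rk_def by simp
  qed
qed

lemma rk_Sn:
  fixes K :: "nat \<Rightarrow> nat"
  assumes inj: "inj_on K (D n)"
  shows "rk n K \<in> Sn n"
proof -
  have i: "inj_on (rk n K) (D n)"
  proof (rule inj_onI)
    fix b c assume b: "b \<in> D n" and c: "c \<in> D n" and e: "rk n K b = rk n K c"
    then have "\<not> K b < K c" "\<not> K c < K b" using rk_less[OF inj b c] rk_less[OF inj c b] by auto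
    then have "K b = K c" by auto
    then show "b = c" using inj_onD[OF inj _ b c] by blast
  qed
  have m: "rk n K b \<in> D n" if b: "b \<in> D n" for b
  proof -
    have "card {c \<in> D n. K c < K b} \<le> card (D n - {b})"
      by (rule card_mono) auto
    then show "rk n K b \<in> D n" using b unfolding rk_def by auto
  qed
  have o: "rk n K b = b" if "b \<notin> D n" for b unfolding rk_def by (rule if_not_P[OF that])
  have "rk n K permutes D n" by (rule inj_imp_permutes[OF i _ m o]) simp
  then show ?thesis by (simp add: Sn_def)
qed

lemma down_closed:
  assumes A: "A \<subseteq> D n" and dc: "\<And>c c'. c \<in> A \<Longrightarrow> 1 \<le> c' \<Longrightarrow> c' \<le> c \<Longrightarrow> c' \<in> A"
  shows "A = {1..card A}"
proof (cases "A = {}")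
  case True then show ?thesis by simp
next
  case False
  have fin: "finite A" using A finite_subset by blast
  define m where "m = Max A"
  have mA: "m \<in> A" using Max_in[OF fin False] m_def by simp
  have "A = {1..m}"
  proof
    show "A \<subseteq> {1..m}" using A Max_ge[OF fin] m_def by auto
    show "{1..m} \<subseteq> A" using dc[OF mA] by auto
  qed
  then show ?thesis by simp
qed

lemma lexenc:
  fixes a a' r r' n :: nat
  assumes "r \<le> n" "r' \<le> n"
  shows "a * Suc n + r < a' * Suc n + r' \<longleftrightarrow> a < a' \<or> (a = a' \<and> r < r')"
proof -
  have X: "a * Suc n + r < a' * Suc n + r''" if "a < a'" "r \<le> n" for a a' r r'' :: nat
  proof -
    have "a * Suc n + r < Suc a * Suc n" using that by simp
    also have "\<dots> \<le> a' * Suc n" using that by (intro mult_le_mono1) simp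
    finally show ?thesis by simp
  qed
  show ?thesis
  proof (cases a a' rule: linorder_cases)
    case less then show ?thesis using X assms by auto
  next
    case equal then show ?thesis by simp
  next
    case greater then show ?thesis using X[of a' a r' r] assms by auto
  qed
qed

lemma factor:
  assumes g: "g \<in> Sn n"
  shows "\<exists>x y. x \<in> Sn n \<and> incr n J x \<and> y \<in> YY n J \<and> g = x \<circ> y"
proof -
  define K where "K b = seg n J b * Suc n + g b" for b
  have gle: "g b \<le> n" if "b \<in> D n" for b using Sn_in[OF g that] by auto
  have Kless: "K b < K c \<longleftrightarrow> seg n J b < seg n J c \<or> (seg n J b = seg n J c \<and> g b < g c)"
    if "b \<in> D n" "c \<in> D n" for b c
    unfolding K_def using lexenc gle that by blast
  have inj: "inj_on K (D n)"
  proof (rule inj_onI)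
    fix b c assume b: "b \<in> D n" and c: "c \<in> D n" and e: "K b = K c"
    then have "\<not> K b < K c" "\<not> K c < K b" by auto
    then have "g b = g c" using Kless[OF b c] Kless[OF c b] by auto
    then show "b = c" using Sn_inj[OF g] by blast
  qed
  define y where "y = rk n K"
  have yS: "y \<in> Sn n" unfolding y_def by (rule rk_Sn[OF inj])
  have yless: "y b < y c \<longleftrightarrow> K b < K c" if "b \<in> D n" "c \<in> D n" for b c
    unfolding y_def using rk_less[OF inj that] .
  have yseg: "seg n J (y b) = seg n J b" if b: "b \<in> D n" for b
  proof -
    define s where "s = seg n J b"
    define L where "L = {c \<in> D n. seg n J c < s}"
    define M where "M = {c \<in> D n. seg n J c \<le> s}"
    define Q where "Q = {c \<in> D n. K c < K b}"
    have LQ: "L \<subseteq> Q" unfolding L_def Q_def s_def using Kless b by auto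
    have QM: "Q \<subseteq> M - {b}" unfolding M_def Q_def s_def using Kless b by force
    have "card L \<le> card Q" by (rule card_mono) (use LQ in \<open>auto simp: Q_def\<close>)
    moreover have "card Q \<le> card (M - {b})" by (rule card_mono) (use QM in \<open>auto simp: M_def\<close>)
    moreover have "card (M - {b}) = card M - 1" using b by (simp add: M_def s_def)
    moreover have "card M \<ge> 1"
    proof -
      have bM: "b \<in> M" using b by (simp add: M_def s_def)
      have finM: "finite M" by (simp add: M_def)
      show ?thesis using bM finM by (auto simp: Suc_le_eq card_gt_0_iff)
    qed
    ultimately have bounds: "card L < y b" "y b \<le> card M" using b unfolding y_def rk_def Q_def by auto
    have Leq: "L = {1..card L}"
      by (rule down_closed[of _ n]) (auto simp: L_def intro: le_less_trans[OF seg_mono])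
    have Meq: "M = {1..card M}"
      by (rule down_closed[of _ n]) (auto simp: M_def intro: le_trans[OF seg_mono])
    have ybD: "y b \<in> D n" using Sn_in[OF yS b] .
    have "y b \<in> M" using bounds ybD by (subst Meq) auto
    moreover have "y b \<notin> L" using bounds by (subst Leq) auto
    ultimately show ?thesis using ybD unfolding L_def M_def s_def by auto
  qed
  have yY: "y \<in> YY n J" unfolding YY_def using yS yseg by auto
  define x where "x = g \<circ> inv y"
  have py: "y permutes D n" using yS by (simp add: Sn_def)
  have xS: "x \<in> Sn n" unfolding x_def using g py
    by (simp add: Sn_def permutes_compose permutes_inv)
  have "x \<circ> y = g \<circ> (inv y \<circ> y)" unfolding x_def by (simp add: comp_assoc)
  then have gxy: "g = x \<circ> y" using permutes_inv_o(2)[OF py] by simp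
  have xinc: "incr n J x" unfolding incr_def
  proof (intro ballI impI)
    fix p q assume p: "p \<in> D n" and q: "q \<in> D n" and pq: "p < q" and sg: "seg n J p = seg n J q"
    define b where "b = inv y p"
    define c where "c = inv y q"
    have bc: "y b = p" "y c = q" unfolding b_def c_def using permutes_inverses(1)[OF py] by auto
    have bD: "b \<in> D n" "c \<in> D n" using p q bc permutes_in_image[OF py] by auto
    have "seg n J b = seg n J c" using yseg bD bc sg by metis
    moreover have "K b < K c" using yless[OF bD] bc pq by simp
    ultimately have "g b < g c" using Kless[OF bD] by auto
    moreover have "x p = g b" "x q = g c" unfolding x_def b_def c_def by auto
    ultimately show "x p < x q" by simp
  qed
  show ?thesis using xS xinc yY gxy by blast
qed



lemma mono_perm_id:
  assumes s: "s permutes D n" and mono: "\<And>p q. p \<in> D n \<Longrightarrow> q \<in> D n \<Longrightarrow> p < q \<Longrightarrow> s p < s q"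
  shows "s = id"
proof (rule permutes_natset_le[OF s], rule ballI)
  fix i assume "i \<in> D n"
  then show "s i \<le> i"
  proof (induction i rule: less_induct)
    case (less i)
    show ?case
    proof (rule ccontr)
      assume gt: "\<not> s i \<le> i"
      obtain r where r: "s r = i" using permutes_surj[OF s] by (metis surjD)
      have rD: "r \<in> D n" using r less.prems permutes_in_image[OF s] by metis
      show False
      proof (cases r i rule: linorder_cases)
        case less
        then have "s r \<le> r" using less.IH rD by blast
        then show False using r less by simp
      next
        case equal then show False using r gt by simp
      next
        case greater
        then have "s i < s r" using mono less.prems rD by blast
        then show False using r gt by simp
      qed
    qed
  qed
qed

lemma YY_inv: "y \<in> YY n J \<Longrightarrow> inv y \<in> YY n J"
proof -
  assume y: "y \<in> YY n J"
  then have py: "y permutes D n" by (simp add: YY_def Sn_def)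
  have "seg n J (inv y p) = seg n J p" if p: "p \<in> D n" for p
  proof -
    have "inv y p \<in> D n" using p permutes_in_image[OF permutes_inv[OF py]] by simp
    then have "seg n J (y (inv y p)) = seg n J (inv y p)" using y by (simp add: YY_def)
    then show ?thesis using permutes_inverses(1)[OF py] by simp
  qed
  then show ?thesis using py by (simp add: YY_def Sn_def permutes_inv)
qed

lemma uniq:
  assumes x1: "x1 \<in> Sn n" "incr n J x1" and x2: "x2 \<in> Sn n" "incr n J x2"
    and y1: "y1 \<in> YY n J" and y2: "y2 \<in> YY n J" and e: "x1 \<circ> y1 = x2 \<circ> y2"
  shows "x1 = x2"
proof -
  define s where "s = y1 \<circ> inv y2"
  have py2: "y2 permutes D n" using y2 by (simp add: YY_def Sn_def)
  have py1: "y1 permutes D n" using y1 by (simp add: YY_def Sn_def)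
  have ps: "s permutes D n" unfolding s_def using py1 py2 by (simp add: permutes_compose permutes_inv)
  have sS: "s \<in> Sn n" using ps by (simp add: Sn_def)
  have xs: "x1 (s p) = x2 p" for p
  proof -
    have "x1 (y1 (inv y2 p)) = x2 (y2 (inv y2 p))" using e by (metis comp_apply)
    then show ?thesis unfolding s_def using permutes_inverses(1)[OF py2] by simp
  qed
  have sseg: "seg n J (s p) = seg n J p" if p: "p \<in> D n" for p
  proof -
    have "inv y2 p \<in> D n" using p permutes_in_image[OF permutes_inv[OF py2]] by simp
    then show ?thesis using y1 YY_inv[OF y2] p unfolding s_def YY_def by simp
  qed
  have "s = id"
  proof (rule mono_perm_id[OF ps])
    fix p q assume p: "p \<in> D n" and q: "q \<in> D n" and pq: "p < q"
    have spD: "s p \<in> D n" "s q \<in> D n" using Sn_in[OF sS] p q by auto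
    have "seg n J p < seg n J q \<or> (seg n J p = seg n J q \<and> x2 p < x2 q)"
      using L1[OF x2 p q] pq by simp
    then have "seg n J (s p) < seg n J (s q) \<or> (seg n J (s p) = seg n J (s q) \<and> x1 (s p) < x1 (s q))"
      using sseg p q xs by simp
    then show "s p < s q" using L1[OF x1 spD] by simp
  qed
  then show ?thesis using xs by (auto simp: fun_eq_iff)
qed

definition NN :: "nat \<Rightarrow> nat set \<Rightarrow> nat set \<Rightarrow> (nat \<Rightarrow> nat) \<Rightarrow> nat" where
  "NN n I J g = card {v \<in> Sn n. incr n I v \<and> incr n J (inv v \<circ> g)}"

lemma core:
  assumes g: "g \<in> Sn n" and g': "g' \<in> Sn n"
    and H: "\<And>b b'. b \<in> D n \<Longrightarrow> b' \<in> D n \<Longrightarrow> seg n J b = seg n J b' \<Longrightarrow> (g b < g b' \<longleftrightarrow> g' b < g' b')"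
  shows "NN n I J g \<le> NN n I J g'"
proof -
  define \<rho> where "\<rho> = g' \<circ> inv g"
  have pg: "g permutes D n" using g by (simp add: Sn_def)
  have \<rho>S: "\<rho> \<in> Sn n" unfolding \<rho>_def using g g' by (simp add: Sn_def permutes_compose permutes_inv)
  have \<rho>g: "\<rho> (g b) = g' b" for b unfolding \<rho>_def using permutes_inverses(2)[OF pg] by simp
  define P where "P v v' \<longleftrightarrow> (\<exists>\<tau>. v' \<in> Sn n \<and> incr n I v' \<and> \<tau> \<in> YY n I \<and> \<rho> \<circ> v = v' \<circ> \<tau>)" for v v'
  define \<Phi> where "\<Phi> v = (SOME v'. P v v')" for v
  define A where "A = {v \<in> Sn n. incr n I v \<and> incr n J (inv v \<circ> g)}"
  define A' where "A' = {v \<in> Sn n. incr n I v \<and> incr n J (inv v \<circ> g')}"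
  have P\<Phi>: "P v (\<Phi> v)" if "v \<in> Sn n" for v
  proof -
    have "\<rho> \<circ> v \<in> Sn n" using that \<rho>S by (simp add: Sn_def permutes_compose)
    then have "\<exists>v'. P v v'" unfolding P_def using factor[of "\<rho> \<circ> v" n I] by metis
    then show ?thesis unfolding \<Phi>_def by (rule someI_ex)
  qed
  have maps: "\<Phi> v \<in> A'" if v: "v \<in> A" for v
  proof -
    have vS: "v \<in> Sn n" and vI: "incr n I v" and vJ: "incr n J (inv v \<circ> g)" using v by (auto simp: A_def)
    obtain \<tau> where v'S: "\<Phi> v \<in> Sn n" and v'I: "incr n I (\<Phi> v)" and \<tau>: "\<tau> \<in> YY n I"
      and e: "\<rho> \<circ> v = \<Phi> v \<circ> \<tau>" using P\<Phi>[OF vS] unfolding P_def by blast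
    define v' where "v' = \<Phi> v"
    have pv: "v permutes D n" using vS by (simp add: Sn_def)
    have pv': "v' permutes D n" using v'S by (simp add: Sn_def v'_def)
    have \<tau>S: "\<tau> \<in> Sn n" using \<tau> by (simp add: YY_def)
    have key: "inv v' (g' b) = \<tau> (inv v (g b))" for b
    proof -
      have "\<rho> (v (inv v (g b))) = v' (\<tau> (inv v (g b)))" using e unfolding v'_def by (metis comp_apply)
      then have "v' (\<tau> (inv v (g b))) = g' b" using permutes_inverses(1)[OF pv] \<rho>g by simp
      then show ?thesis using permutes_inverses(2)[OF pv'] by metis
    qed
    have "incr n J (inv v' \<circ> g')" unfolding incr_def
    proof (intro ballI impI)
      fix b b' assume b: "b \<in> D n" and b': "b' \<in> D n" and bb: "b < b'" and sg: "seg n J b = seg n J b'"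
      define p where "p = inv v (g b)"
      define q where "q = inv v (g b')"
      have pq: "p < q" using vJ b b' bb sg unfolding incr_def p_def q_def by simp
      have pD: "p \<in> D n" "q \<in> D n" unfolding p_def q_def
        using Sn_in[OF g] b b' permutes_in_image[OF permutes_inv[OF pv]] by auto
      have vp: "v p = g b" "v q = g b'" unfolding p_def q_def using permutes_inverses(1)[OF pv] by auto
      have tpD: "\<tau> p \<in> D n" "\<tau> q \<in> D n" using Sn_in[OF \<tau>S] pD by auto
      have tseg: "seg n I (\<tau> p) = seg n I p" "seg n I (\<tau> q) = seg n I q" using \<tau> pD by (auto simp: YY_def)
      have v'tp: "v' (\<tau> p) = g' b" "v' (\<tau> q) = g' b'"
        using key[of b] key[of b'] permutes_inverses(1)[OF pv'] unfolding p_def q_def by metis+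
      have "seg n I p < seg n I q \<or> (seg n I p = seg n I q \<and> g b < g b')"
        using L1[OF vS vI pD] pq vp by simp
      then have "seg n I (\<tau> p) < seg n I (\<tau> q) \<or> (seg n I (\<tau> p) = seg n I (\<tau> q) \<and> v' (\<tau> p) < v' (\<tau> q))"
        using tseg v'tp H[OF b b' sg] by simp
      then have "\<tau> p < \<tau> q" using L1[OF v'S[folded v'_def] v'I[folded v'_def] tpD] by simp
      then show "(inv v' \<circ> g') b < (inv v' \<circ> g') b'" using key unfolding p_def q_def by simp
    qed
    then show ?thesis using v'S v'I unfolding A'_def v'_def by simp
  qed
  have inj: "inj_on \<Phi> A"
  proof (rule inj_onI)
    fix v1 v2 assume v1: "v1 \<in> A" and v2: "v2 \<in> A" and e: "\<Phi> v1 = \<Phi> v2"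
    have v1S: "v1 \<in> Sn n" "incr n I v1" and v2S: "v2 \<in> Sn n" "incr n I v2" using v1 v2 by (auto simp: A_def)
    obtain \<tau>1 where \<tau>1: "\<tau>1 \<in> YY n I" and e1: "\<rho> \<circ> v1 = \<Phi> v1 \<circ> \<tau>1" using P\<Phi>[OF v1S(1)] unfolding P_def by blast
    obtain \<tau>2 where \<tau>2: "\<tau>2 \<in> YY n I" and e2: "\<rho> \<circ> v2 = \<Phi> v2 \<circ> \<tau>2" using P\<Phi>[OF v2S(1)] unfolding P_def by blast
    have p1: "\<tau>1 permutes D n" "\<tau>2 permutes D n" using \<tau>1 \<tau>2 by (auto simp: YY_def Sn_def)
    have "v1 (inv \<tau>1 p) = v2 (inv \<tau>2 p)" for p
    proof -
      have "\<rho> (v1 (inv \<tau>1 p)) = \<Phi> v1 (\<tau>1 (inv \<tau>1 p))" using e1 by (metis comp_apply)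
      moreover have "\<rho> (v2 (inv \<tau>2 p)) = \<Phi> v2 (\<tau>2 (inv \<tau>2 p))" using e2 by (metis comp_apply)
      ultimately have "\<rho> (v1 (inv \<tau>1 p)) = \<rho> (v2 (inv \<tau>2 p))"
        using e permutes_inverses(1)[OF p1(1)] permutes_inverses(1)[OF p1(2)] by simp
      then show ?thesis using Sn_inj[OF \<rho>S] by blast
    qed
    then have "v1 \<circ> inv \<tau>1 = v2 \<circ> inv \<tau>2" by (auto simp: fun_eq_iff)
    then show "v1 = v2" using uniq[OF v1S v2S YY_inv[OF \<tau>1] YY_inv[OF \<tau>2]] by blast
  qed
  have "card A \<le> card A'"
    by (rule card_inj_on_le[OF inj]) (use maps Sn_finite in \<open>auto simp: A'_def\<close>)
  then show ?thesis unfolding NN_def A_def A'_def .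
qed



lemma BI_Sn: "u \<in> Sn n \<Longrightarrow> BI n I u = (if incr n I u then 1 else 0)"
  by (simp add: BI_def Des_incr)

lemma count_sum:
  assumes "finite S"
  shows "(\<Sum>u\<in>S. (if P u then 1 else 0) :: 'k::comm_ring_1) = of_nat (card {u\<in>S. P u})"
  using assms by (simp add: sum.inter_filter[symmetric])

lemma lhs_coeff:
  assumes g: "g \<in> Sn n"
  shows "gmult n (BI n I) (BI n J) g = (of_nat (NN n I J g) :: 'k::comm_ring_1)"
proof -
  have "gmult n (BI n I) (BI n J) g = (\<Sum>u\<in>Sn n. (if incr n I u \<and> incr n J (inv u \<circ> g) then 1 else 0) :: 'k)"
    using g by (auto simp: gmult_in BI_Sn inv_comp_Sn intro!: sum.cong)
  also have "\<dots> = of_nat (NN n I J g)" unfolding NN_def by (rule count_sum[OF Sn_finite])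
  finally show ?thesis .
qed

lemma NN_inv:
  assumes x: "x \<in> Sn n" "incr n J x" and y: "y \<in> YY n J"
  shows "NN n I J (x \<circ> y) = NN n I J y"
proof -
  have yS: "y \<in> Sn n" using y by (simp add: YY_def)
  have xyS: "x \<circ> y \<in> Sn n" using x yS by (simp add: Sn_def permutes_compose)
  have H: "(x \<circ> y) b < (x \<circ> y) b' \<longleftrightarrow> y b < y b'"
    if b: "b \<in> D n" and b': "b' \<in> D n" and sg: "seg n J b = seg n J b'" for b b'
  proof -
    have D: "y b \<in> D n" "y b' \<in> D n" using Sn_in[OF yS] b b' by auto
    have "seg n J (y b) = seg n J (y b')" using y b b' sg by (simp add: YY_def)
    then show ?thesis using L1[OF x D] by simp
  qed
  have H': "y b < y b' \<longleftrightarrow> (x \<circ> y) b < (x \<circ> y) b'"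
    if "b \<in> D n" "b' \<in> D n" "seg n J b = seg n J b'" for b b'
    using H[OF that] by blast
  have 1: "NN n I J (x \<circ> y) \<le> NN n I J y" by (rule core[where J=J and I=I, OF xyS yS H]) 
  have 2: "NN n I J y \<le> NN n I J (x \<circ> y)" by (rule core[where J=J and I=I, OF yS xyS H'])
  show ?thesis using 1 2 by (rule le_antisym)
qed

lemma prod_eq:
  "gmult n (BI n I) (BI n J) =
   gmult n (BI n J) (\<lambda>h. if h \<in> YY n J then (of_nat (NN n I J h) :: 'k::comm_ring_1) else 0)"
  (is "_ = gmult n _ ?T")
proof (rule ext)
  fix g
  show "gmult n (BI n I) (BI n J) g = gmult n (BI n J) ?T g"
  proof (cases "g \<in> Sn n")
    case False then show ?thesis by (simp add: gmult_out)
  next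
    case True
    obtain x y where x: "x \<in> Sn n" "incr n J x" and y: "y \<in> YY n J" and gxy: "g = x \<circ> y"
      using factor[OF True] by blast
    have px: "x permutes D n" using x by (simp add: Sn_def)
    have "inv x \<circ> g = (inv x \<circ> x) \<circ> y" unfolding gxy by (simp add: comp_assoc)
    then have ix: "inv x \<circ> g = y" using permutes_inv_o(2)[OF px] by simp
    have "gmult n (BI n J) ?T g = (\<Sum>u\<in>Sn n. BI n J u * ?T (inv u \<circ> g))" using True by (simp add: gmult_in)
    also have "\<dots> = (\<Sum>u\<in>{x}. BI n J u * ?T (inv u \<circ> g))"
    proof (rule sum.mono_neutral_right[OF Sn_finite])
      show "{x} \<subseteq> Sn n" using x by simp
      show "\<forall>u\<in>Sn n - {x}. BI n J u * ?T (inv u \<circ> g) = 0"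
      proof
        fix u assume u: "u \<in> Sn n - {x}"
        show "BI n J u * ?T (inv u \<circ> g) = 0"
        proof (rule ccontr)
          assume ne: "BI n J u * ?T (inv u \<circ> g) \<noteq> 0"
          then have ui: "incr n J u" using u by (auto simp: BI_Sn)
          have y': "inv u \<circ> g \<in> YY n J" using ne by (auto split: if_splits)
          have pu: "u permutes D n" using u by (simp add: Sn_def)
          have "u \<circ> (inv u \<circ> g) = (u \<circ> inv u) \<circ> g" by (simp add: comp_assoc)
          then have "u \<circ> (inv u \<circ> g) = g" using permutes_inv_o(1)[OF pu] by simp
          then have "x \<circ> y = u \<circ> (inv u \<circ> g)" using gxy by simp
          then have "x = u" using uniq[OF x _ ui y y'] u by auto
          then show False using u by auto
        qed
      qed
    qed
    also have "\<dots> = of_nat (NN n I J y)" using x y ix by (simp add: BI_Sn)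
    also have "\<dots> = of_nat (NN n I J g)" using NN_inv[OF x y] gxy by simp
    also have "\<dots> = gmult n (BI n I) (BI n J) g" by (rule lhs_coeff[OF True, symmetric])
    finally show ?thesis by simp
  qed
qed

theorem proposition2p7:
  fixes n :: nat and \<beta> :: "nat list"
  assumes "\<beta> \<in> Comp n"
  shows "(\<forall>r \<in> (R_comp n \<beta> :: ((nat \<Rightarrow> nat) \<Rightarrow> 'k::comm_ring_1) set). \<forall>a \<in> grp_alg n.
            gmult n r a \<in> R_comp n \<beta>)
       \<and> (\<forall>s \<in> (descent_alg n :: ((nat \<Rightarrow> nat) \<Rightarrow> 'k::comm_ring_1) set). \<forall>r \<in> R_comp n \<beta>.
            gmult n s r \<in> R_comp n \<beta>)"
proof (intro conjI ballI)
  fix r a :: "(nat \<Rightarrow> nat) \<Rightarrow> 'k" assume r: "r \<in> R_comp n \<beta>" and a: "a \<in> grp_alg n"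
  obtain a0 where r0: "r = gmult n (B_comp n \<beta>) a0" using r by (auto simp: R_comp_def)
  have "gmult n r a = gmult n (B_comp n \<beta>) (gmult n a0 a)" unfolding r0 by (rule gmult_assoc)
  then show "gmult n r a \<in> R_comp n \<beta>" unfolding R_comp_def using gmult_grp_alg by blast
next
  fix s r :: "(nat \<Rightarrow> nat) \<Rightarrow> 'k" assume s: "s \<in> descent_alg n" and r: "r \<in> R_comp n \<beta>"
  obtain a0 where r0: "r = gmult n (B_comp n \<beta>) a0" using r by (auto simp: R_comp_def)
  obtain c where s0: "s = (\<lambda>w. \<Sum>I\<in>Pow {1..n-1}. c I * BI n I w)" using s by (auto simp: descent_alg_def)
  define J where "J = SetC \<beta>"
  define T where "T I = (\<lambda>h. if h \<in> YY n J then (of_nat (NN n I J h) :: 'k) else 0)" for I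
  have "gmult n s r = (\<lambda>g. \<Sum>I\<in>Pow {1..n-1}. c I * gmult n (BI n I) r g)"
    unfolding s0 by (rule gmult_lin1) simp
  also have "\<dots> = (\<lambda>g. \<Sum>I\<in>Pow {1..n-1}. c I * gmult n (BI n J) (gmult n (T I) a0) g)"
  proof -
    have "gmult n (BI n I) r = gmult n (BI n J) (gmult n (T I) a0)" for I
    proof -
      have "gmult n (BI n I) r = gmult n (gmult n (BI n I) (BI n J)) a0"
        unfolding r0 B_comp_def J_def by (rule gmult_assoc[symmetric])
      also have "\<dots> = gmult n (gmult n (BI n J) (T I)) a0" unfolding T_def by (simp only: prod_eq)
      also have "\<dots> = gmult n (BI n J) (gmult n (T I) a0)" by (rule gmult_assoc)
      finally show ?thesis .
    qed
    then show ?thesis by simp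
  qed
  also have "\<dots> = gmult n (BI n J) (\<lambda>h. \<Sum>I\<in>Pow {1..n-1}. c I * gmult n (T I) a0 h)"
    by (rule gmult_lin2[symmetric]) simp
  finally have eq: "gmult n s r = gmult n (B_comp n \<beta>) (\<lambda>h. \<Sum>I\<in>Pow {1..n-1}. c I * gmult n (T I) a0 h)"
    unfolding B_comp_def J_def .
  have "(\<lambda>h. \<Sum>I\<in>Pow {1..n-1}. c I * gmult n (T I) a0 h) \<in> grp_alg n"
    by (simp add: grp_alg_def gmult_out)
  then show "gmult n s r \<in> R_comp n \<beta>" unfolding R_comp_def eq by blast
qed

end
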